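(* Let $f^1$ be one of the Gaussian-type smearing functions $f^1_{\rm G}$, $f^1_{{\rm MP},N'}$ (for some $N'\in\mathbb N$) or $f^1_{\rm cs}$ (for some $a\in\mathbb R$). Then $f^1$ extends to an entire function, and there exist $C\ge0$ and $q\ge0$ such that for all $x,y\in\mathbb R$, $$|f^1(x+iy)|\le\begin{cases}C\big(1+(x^2+y^2)^q\big)e^{y^2-x^2}&\text{if }x\ge0,\\ C\big(1+(x^2+y^2)^q\big)\big(1+e^{y^2-x^2}\big)&\text{if }x<0.\end{cases}$$
   Context: $f^1_{\rm G}(x)=\frac12(1-\mathrm{erf}(x))=\frac1{\sqrt\pi}\int_x^\infty e^{-t^2}dt$. Hermite polynomials: $H_0=1$, $H_{n+1}(x)=2xH_n(x)-H_n'(x)$. Methfessel–Paxton: $f^1_{{\rm MP},N'}(x)=f^1_{\rm G}(x)+\sum_{n=1}^{N'}A_nH_{2n-1}(x)e^{-x^2}$ with $A_n=\frac{(-1)^n}{n!4^n\sqrt\pi}$. Cold smearing: $f^1_{\rm cs}(x)=f^1_{\rm G}(x)+\frac1{4\sqrt\pi}(-aH_2(x)+H_1(x))e^{-x^2}$ with a parameter $a\in\mathbb R$. *)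

theory Defs
  imports "HOL-Complex_Analysis.Complex_Analysis" "HOL-Computational_Algebra.Polynomial"
begin

definition fG :: "real \<Rightarrow> real" where
  "fG x = (1 / sqrt pi) * integral {x..} (\<lambda>t. exp (- (t^2)))"

fun hermite :: "nat \<Rightarrow> real poly" where
  "hermite 0 = 1"
| "hermite (Suc n) = [:0, 2:] * hermite n - pderiv (hermite n)"

definition mpA :: "nat \<Rightarrow> real" where
  "mpA n = (-1) ^ n / (fact n * 4 ^ n * sqrt pi)"

definition fMP :: "nat \<Rightarrow> real \<Rightarrow> real" where
  "fMP N x = fG x + (\<Sum>n = 1..N. mpA n * poly (hermite (2 * n - 1)) x * exp (- (x^2)))"

definition fcs :: "real \<Rightarrow> real \<Rightarrow> real" where
  "fcs a x = fG x + 1 / (4 * sqrt pi) * (- a * poly (hermite 2) x + poly (hermite 1) x) * exp (- (x^2))"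

definition gaussian_type_smearing :: "(real \<Rightarrow> real) \<Rightarrow> bool" where
  "gaussian_type_smearing f \<longleftrightarrow> f = fG \<or> (\<exists>N. f = fMP N) \<or> (\<exists>a. f = fcs a)"

end

theory Submission imports Defs begin

definition phi :: "real \<Rightarrow> real" where "phi t = exp (- (t^2))"

lemma phi_bound: "phi t \<le> exp (1/4) * exp (- t)"
proof -
  have "- (t^2) \<le> 1/4 + (- t)" using zero_le_power2[of "t - 1/2"] by (simp add: power2_eq_square algebra_simps)
  then have "exp (- (t^2)) \<le> exp (1/4 + (- t))" by simp
  then show ?thesis by (simp add: phi_def mult_exp_exp)
qed

lemma phi_int: "phi integrable_on {a..}"
proof (rule measurable_bounded_by_integrable_imp_integrable_real)
  show "phi \<in> borel_measurable (lebesgue_on {a..})"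
    by (rule continuous_imp_measurable_on_sets_lebesgue) (auto simp: phi_def intro!: continuous_intros)
  show "(\<lambda>t. exp (1/4) * exp (-1 * t)) integrable_on {a..}"
    using integrable_on_cmult_left[OF integrable_on_exp_minus_to_infinity[of 1 a], of "exp (1/4)"] by simp
  show "\<bar>phi x\<bar> \<le> exp (1/4) * exp (-1 * x)" if "x \<in> {a..}" for x
    using phi_bound[of x] by (simp add: phi_def)
qed auto

lemma phi_int_ivl: "phi integrable_on {a..b}"
  by (rule integrable_continuous_interval) (auto simp: phi_def intro!: continuous_intros)

definition Ii :: "real \<Rightarrow> real" where "Ii a = integral {a..} phi"

lemma Ii_split: assumes "a \<le> b" shows "Ii a = integral {a..b} phi + Ii b"
proof -
  have "(phi has_integral (integral {a..b} phi + Ii b)) ({a..b} \<union> {b..})"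
    apply (rule has_integral_Un)
    using phi_int phi_int_ivl unfolding Ii_def
      apply (auto simp: integrable_integral)
    apply (rule negligible_subset[of "{b}"]) by auto
  moreover have "{a..b} \<union> {b..} = {a..}" using assms by auto
  ultimately show ?thesis unfolding Ii_def by (simp add: integral_unique)
qed

lemma Ii_nonneg: "0 \<le> Ii a"
  unfolding Ii_def by (rule integral_nonneg) (auto simp: phi_int phi_def)

lemma Ii_bound: "Ii a \<le> exp (1/4) * exp (-a)"
proof -
  have "Ii a \<le> integral {a..} (\<lambda>t. exp (1/4) * exp (-1 * t))"
    unfolding Ii_def
    apply (rule integral_le)
    using phi_int integrable_on_cmult_left[OF integrable_on_exp_minus_to_infinity[of 1 a], of "exp (1/4)"]
    by (auto simp: phi_bound)
  also have "\<dots> = exp (1/4) * exp (-a)"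
    using has_integral_cmul[OF has_integral_exp_minus_to_infinity[of 1 a], of "exp (1/4)"]
    by (intro integral_unique) simp
  finally show ?thesis .
qed

lemma ivl_le: assumes "0 \<le> T" shows "integral {0..T} phi \<le> Ii 0"
  using Ii_split[OF assms] Ii_nonneg[of T] by simp

lemma g_real:
  fixes g :: "complex \<Rightarrow> complex"
  assumes g: "\<And>z. (g has_field_derivative exp (-(z^2))) (at z)" and ab: "a \<le> b"
  shows "g (of_real b) - g (of_real a) = of_real (integral {a..b} phi)"
proof -
  have "((\<lambda>t. g (of_real t)) has_vector_derivative exp (-((of_real t)^2))) (at t within {a..b})" for t
    by (rule has_vector_derivative_real_field[OF g])
  then have "((\<lambda>t. exp (-((of_real t :: complex)^2))) has_integral (g (of_real b) - g (of_real a))) {a..b}"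
    by (intro fundamental_theorem_of_calculus[OF ab]) auto
  moreover have "(\<lambda>t. exp (-((of_real t :: complex)^2))) = (\<lambda>t. of_real (phi t))"
    by (auto simp: phi_def simp flip: exp_of_real)
  moreover have "((\<lambda>t. of_real (phi t) :: complex) has_integral of_real (integral {a..b} phi)) {a..b}"
    using has_integral_linear[OF integrable_integral[OF phi_int_ivl] bounded_linear_of_real]
    by (simp add: o_def)
  ultimately show ?thesis using has_integral_unique by metis
qed

lemma g_horiz:
  fixes g :: "complex \<Rightarrow> complex"
  assumes g: "\<And>z. (g has_field_derivative exp (-(z^2))) (at z)" and T: "0 \<le> T" and x: "0 \<le> x"
  shows "norm (g (Complex x y + of_real T) - g (Complex x y)) \<le> exp (y^2 - x^2) * Ii 0"
proof -
  define z where "z = Complex x y"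
  have "((\<lambda>w. g (z + w)) has_field_derivative exp (-((z + of_real t)^2))) (at (of_real t))" for t
  proof -
    have "((\<lambda>w. z + w) has_field_derivative 1) (at (of_real t))"
      by (auto intro!: derivative_eq_intros)
    from DERIV_chain2[OF g this] show ?thesis by simp
  qed
  then have "((\<lambda>t. g (z + of_real t)) has_vector_derivative exp (-((z + of_real t)^2))) (at t within {0..T})" for t
    by (rule has_vector_derivative_real_field)
  then have hi: "((\<lambda>t. exp (-((z + of_real t)^2))) has_integral (g (z + of_real T) - g (z + of_real 0))) {0..T}"
    by (intro fundamental_theorem_of_calculus[OF T]) auto
  have pt: "norm (exp (-((z + of_real t)^2))) \<le> exp (y^2 - x^2) * phi t" if "t \<in> {0..T}" for t
  proof -
    have "norm (exp (-((z + of_real t)^2))) = exp (y^2 - (x+t)^2)"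
      by (simp add: z_def power2_eq_square)
    also have "\<dots> \<le> exp (y^2 - x^2 + (- (t^2)))"
      using that x by (simp add: power2_eq_square algebra_simps)
    also have "\<dots> = exp (y^2 - x^2) * phi t" by (simp add: phi_def mult_exp_exp)
    finally show ?thesis .
  qed
  have "norm (integral {0..T} (\<lambda>t. exp (-((z + of_real t)^2)))) \<le> integral {0..T} (\<lambda>t. exp (y^2 - x^2) * phi t)"
    by (rule integral_norm_bound_integral) (use hi pt phi_int_ivl in \<open>auto intro: integrable_on_cmult_left\<close>)
  also have "\<dots> = exp (y^2 - x^2) * integral {0..T} phi" by simp
  also have "\<dots> \<le> exp (y^2 - x^2) * Ii 0" using ivl_le[OF T] by simp
  finally show ?thesis using hi by (simp add: integral_unique z_def)
qed

lemma g_vert: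
  fixes g :: "complex \<Rightarrow> complex"
  assumes g: "\<And>z. (g has_field_derivative exp (-(z^2))) (at z)" and T: "0 \<le> T" and x: "0 \<le> x"
  shows "norm (g (Complex (x+T) y) - g (of_real (x+T))) \<le> exp (y^2) * exp (-(T^2)) * \<bar>y\<bar>"
proof -
  have "norm (g (Complex (x+T) y) - g (of_real (x+T))) \<le> exp (y^2) * exp (-(T^2)) * norm (Complex (x+T) y - of_real (x+T))"
  proof (rule field_differentiable_bound[of "closed_segment (of_real (x+T)) (Complex (x+T) y)"])
    fix w assume w: "w \<in> closed_segment (of_real (x+T)) (Complex (x+T) y)"
    show "(g has_field_derivative exp (-(w^2))) (at w within closed_segment (of_real (x+T)) (Complex (x+T) y))"
      using g has_field_derivative_at_within by blast
    from w obtain u where u: "0 \<le> u" "u \<le> 1" "w = (1 - u) *\<^sub>R of_real (x+T) + u *\<^sub>R Complex (x+T) y"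
      unfolding closed_segment_def by auto
    have re: "Re w = x + T" and im: "Im w = u * y" by (simp_all add: u(3) algebra_simps)
    have "norm (exp (-(w^2))) = exp ((Im w)^2 - (Re w)^2)"
      by (simp add: power2_eq_square)
    also have "\<dots> \<le> exp (y^2 + (-(T^2)))"
    proof -
      have "u^2 \<le> 1" using u by (simp add: power_le_one)
      then have "u^2 * y^2 \<le> 1 * y^2" by (intro mult_right_mono) auto
      then have "(u*y)^2 \<le> y^2" by (simp add: power_mult_distrib)
      moreover have "T^2 \<le> (x+T)^2" using x T by (simp add: power2_eq_square algebra_simps)
      ultimately show ?thesis by (simp add: re im)
    qed
    also have "\<dots> = exp (y^2) * exp (-(T^2))" by (simp add: mult_exp_exp)
    finally show "norm (exp (-(w^2))) \<le> exp (y^2) * exp (-(T^2))" .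
  qed auto
  also have "norm (Complex (x+T) y - of_real (x+T)) = \<bar>y\<bar>"
    by (simp add: complex_eq_iff norm_complex_def)
  finally show ?thesis .
qed

lemma g_bound_pos:
  fixes g :: "complex \<Rightarrow> complex"
  assumes g: "\<And>z. (g has_field_derivative exp (-(z^2))) (at z)" and x: "0 \<le> x"
  shows "norm (of_real (Ii 0) - (g (Complex x y) - g 0)) \<le> exp (y^2 - x^2) * Ii 0"
proof -
  define A where "A = norm (of_real (Ii 0) - (g (Complex x y) - g 0))"
  define B where "B = exp (y^2 - x^2) * Ii 0"
  define err where "err T = exp (1/4) * exp (-T) + exp (y^2) * exp (-(T^2)) * \<bar>y\<bar>" for T :: real
  have le: "A \<le> B + err T" if T: "0 \<le> T" for T
  proof -
    have xT: "0 \<le> x + T" using x T by simp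
    have e1: "Ii 0 = integral {0..x+T} phi + Ii (x+T)" by (rule Ii_split[OF xT])
    have e2: "g (of_real (x+T)) - g (of_real 0) = of_real (integral {0..x+T} phi)"
      by (rule g_real[OF g xT])
    have e3: "Complex x y + of_real T = Complex (x+T) y" by (simp add: complex_eq_iff)
    have tri: "norm (a + b + c) \<le> norm a + norm b + norm c" for a b c :: complex
      using norm_triangle_ineq[of "a+b" c] norm_triangle_ineq[of a b] by linarith
    have eq: "of_real (Ii 0) - (g (Complex x y) - g 0) =
          of_real (Ii (x+T)) + (g (of_real (x+T)) - g (Complex (x+T) y)) + (g (Complex x y + of_real T) - g (Complex x y))"
      using e1 e2 e3 by (simp add: algebra_simps)
    have "A \<le> norm (of_real (Ii (x+T)) :: complex) + norm (g (of_real (x+T)) - g (Complex (x+T) y)) + norm (g (Complex x y + of_real T) - g (Complex x y))"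
      unfolding A_def eq by (rule tri)
    also have "norm (of_real (Ii (x+T)) :: complex) \<le> exp (1/4) * exp (-T)"
    proof -
      have "norm (of_real (Ii (x+T)) :: complex) = Ii (x+T)" using Ii_nonneg by simp
      also have "\<dots> \<le> exp (1/4) * exp (-(x+T))" by (rule Ii_bound)
      also have "\<dots> \<le> exp (1/4) * exp (-T)" using x by simp
      finally show ?thesis .
    qed
    also have "norm (g (of_real (x+T)) - g (Complex (x+T) y)) \<le> exp (y^2) * exp (-(T^2)) * \<bar>y\<bar>"
      using g_vert[OF g T x, of y] by (simp add: norm_minus_commute)
    also have "norm (g (Complex x y + of_real T) - g (Complex x y)) \<le> B"
      unfolding B_def by (rule g_horiz[OF g T x])
    finally show ?thesis unfolding err_def by linarith
  qed
  have l1: "((\<lambda>T::real. exp (-T)) \<longlongrightarrow> 0) at_top"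
    using filterlim_compose[OF exp_at_bot filterlim_uminus_at_bot_at_top] .
  have "LIM T at_top. (T::real)^2 :> at_top"
    by (rule filterlim_pow_at_top[OF _ filterlim_ident]) simp
  then have "LIM T at_top. - ((T::real)^2) :> at_bot"
    by (rule filterlim_compose[OF filterlim_uminus_at_bot_at_top])
  then have l2: "((\<lambda>T::real. exp (-(T^2))) \<longlongrightarrow> 0) at_top"
    by (rule filterlim_compose[OF exp_at_bot])
  have "((\<lambda>T. B + err T) \<longlongrightarrow> B + (exp (1/4) * 0 + exp (y^2) * 0 * \<bar>y\<bar>)) at_top"
    unfolding err_def by (intro tendsto_intros l1 l2)
  then have lim: "((\<lambda>T. B + err T) \<longlongrightarrow> B) at_top" by simp
  have ev: "eventually (\<lambda>T. A \<le> B + err T) at_top"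
    by (rule eventually_at_top_linorderI[of 0]) (rule le)
  have "A \<le> B"
    by (rule tendsto_le[OF trivial_limit_at_top_linorder lim tendsto_const ev])
  then show ?thesis unfolding A_def B_def .
qed

lemma g_odd:
  fixes g :: "complex \<Rightarrow> complex"
  assumes g: "\<And>z. (g has_field_derivative exp (-(z^2))) (at z)"
  shows "g (-z) = 2 * g 0 - g z"
proof -
  have d: "((\<lambda>w. g w + g (-w)) has_field_derivative 0) (at w within UNIV)" for w
  proof -
    have "((\<lambda>w. - w) has_field_derivative -1) (at w)" by (auto intro!: derivative_eq_intros)
    from DERIV_chain2[OF g this] have "((\<lambda>w. g (-w)) has_field_derivative exp (-((-w)^2)) * -1) (at w)" .
    from DERIV_add[OF g this] show ?thesis by simp
  qed
  have "\<exists>c. \<forall>w\<in>UNIV. g w + g (-w) = c"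
    by (rule has_field_derivative_zero_constant[OF convex_UNIV d])
  then obtain c where c: "\<forall>w\<in>UNIV. g w + g (-w) = c" by (rule exE)
  have h1: "g 0 + g 0 = c" using bspec[OF c UNIV_I, of 0] by simp
  have h2: "g z + g (-z) = c" using bspec[OF c UNIV_I, of z] by simp
  have "g (-z) = (g z + g (-z)) - g z" by (rule add_diff_cancel_left'[symmetric])
  also have "\<dots> = (g 0 + g 0) - g z" using h1 h2 by (rule_tac arg_cong[where f="\<lambda>t. t - g z"]) simp
  also have "\<dots> = 2 * g 0 - g z" by (subst mult_2) (rule refl)
  finally show ?thesis .
qed

lemma gauss_part:
  "\<exists>F :: complex \<Rightarrow> complex. \<exists>C0 \<ge> 0. F holomorphic_on UNIV \<and>
     (\<forall>x::real. F (of_real x) = of_real (fG x)) \<and>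
     (\<forall>x y. cmod (F (Complex x y)) \<le> C0 * (if x \<ge> 0 then exp (y^2 - x^2) else 1 + exp (y^2 - x^2)))"
proof -
  obtain g :: "complex \<Rightarrow> complex" where g0: "\<And>z. z \<in> UNIV \<Longrightarrow> (g has_field_derivative exp (-(z^2))) (at z within UNIV)"
    by (rule holomorphic_convex_primitive'[of UNIV "\<lambda>z. exp (-(z^2))"]) (auto intro!: holomorphic_intros)
  have g: "\<And>z. (g has_field_derivative exp (-(z^2))) (at z)" using g0 by simp
  define F where "F = (\<lambda>z. (of_real (Ii 0) - (g z - g 0)) / of_real (sqrt pi))"
  define C0 where "C0 = 2 * Ii 0 / sqrt pi"
  have hol: "F holomorphic_on UNIV"
  proof -
    have "g holomorphic_on UNIV" unfolding holomorphic_on_def field_differentiable_def using g0 by blast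
    then show ?thesis unfolding F_def by (intro holomorphic_intros) auto
  qed
  have phi_eq: "phi = (\<lambda>t. exp (- (t^2)))" by (auto simp: phi_def)
  have real: "F (of_real x) = of_real (fG x)" for x
  proof -
    have "of_real (Ii 0) - (g (of_real x) - g 0) = (of_real (Ii x) :: complex)"
    proof (cases "0 \<le> x")
      case True
      show ?thesis using Ii_split[OF True] g_real[OF g True] by simp
    next
      case False
      then have "x \<le> 0" by simp
      show ?thesis using Ii_split[OF \<open>x \<le> 0\<close>] g_real[OF g \<open>x \<le> 0\<close>] by (simp add: algebra_simps)
    qed
    then show ?thesis unfolding F_def fG_def Ii_def phi_eq by simp
  qed
  have bnd: "cmod (F (Complex x y)) \<le> C0 * (if x \<ge> 0 then exp (y^2 - x^2) else 1 + exp (y^2 - x^2))" for x y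
  proof -
    have sp: "sqrt pi > 0" by simp
    have I0: "0 \<le> Ii 0" by (rule Ii_nonneg)
    have "norm (of_real (Ii 0) - (g (Complex x y) - g 0)) \<le> Ii 0 * (if x \<ge> 0 then 2 * exp (y^2 - x^2) else 2 + 2 * exp (y^2 - x^2))"
    proof (cases "0 \<le> x")
      case True
      have "Ii 0 * exp (y^2 - x^2) \<le> Ii 0 * (2 * exp (y^2 - x^2))"
        by (intro mult_left_mono) (auto simp: I0)
      then show ?thesis using g_bound_pos[OF g True, of y] True by (simp add: mult_ac)
    next
      case False
      have m: "- Complex x y = Complex (-x) (-y)" by (simp add: complex_eq_iff)
      have "of_real (Ii 0) - (g (Complex x y) - g 0) = 2 * of_real (Ii 0) - (of_real (Ii 0) - (g (Complex (-x) (-y)) - g 0))"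
        using g_odd[OF g, of "Complex x y"] m by (simp add: algebra_simps)
      also have "norm \<dots> \<le> norm (2 * of_real (Ii 0) :: complex) + norm (of_real (Ii 0) - (g (Complex (-x) (-y)) - g 0))"
        by (rule norm_triangle_ineq4)
      also have "\<dots> \<le> 2 * Ii 0 + exp (y^2 - x^2) * Ii 0"
        using g_bound_pos[OF g, of "-x" "-y"] False I0 by (simp add: norm_mult)
      also have "\<dots> \<le> Ii 0 * (2 + 2 * exp (y^2 - x^2))" using I0 by (simp add: algebra_simps)
      finally show ?thesis using False by simp
    qed
    then have "cmod (F (Complex x y)) \<le> Ii 0 * (if x \<ge> 0 then 2 * exp (y^2 - x^2) else 2 + 2 * exp (y^2 - x^2)) / sqrt pi"
      unfolding F_def using sp by (simp add: norm_divide divide_right_mono)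
    also have "\<dots> = C0 * (if x \<ge> 0 then exp (y^2 - x^2) else 1 + exp (y^2 - x^2))"
      unfolding C0_def by (simp add: field_simps)
    finally show ?thesis .
  qed
  have "C0 \<ge> 0" unfolding C0_def using Ii_nonneg[of 0] by simp
  then show ?thesis using hol real bnd by blast
qed

lemma pow_le_powr:
  fixes r :: real
  assumes "0 \<le> r" "i \<le> n"
  shows "r ^ i \<le> 1 + (r^2) powr real n"
proof (cases "r \<le> 1")
  case True
  then have "r ^ i \<le> 1" using assms by (simp add: power_le_one)
  then show ?thesis by (smt (verit) powr_ge_zero)
next
  case False
  then have "r ^ i \<le> r ^ (2*n)" using assms by (intro power_increasing) auto
  also have "\<dots> = (r^2) powr real n" using False
    by (simp add: powr_realpow power_mult)
  finally show ?thesis by simp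
qed

lemma poly_growth:
  fixes q :: "complex poly"
  shows "\<exists>D \<ge> 0. \<forall>z. cmod (poly q z) \<le> D * (1 + (cmod z ^ 2) powr real (degree q))"
proof -
  define D where "D = (\<Sum>i\<le>degree q. cmod (coeff q i))"
  have "cmod (poly q z) \<le> D * (1 + (cmod z ^ 2) powr real (degree q))" for z
  proof -
    have "cmod (poly q z) \<le> (\<Sum>i\<le>degree q. cmod (coeff q i * z ^ i))"
      unfolding poly_altdef by (rule norm_sum)
    also have "\<dots> \<le> (\<Sum>i\<le>degree q. cmod (coeff q i) * (1 + (cmod z ^ 2) powr real (degree q)))"
      by (intro sum_mono) (auto simp: norm_mult norm_power intro!: mult_left_mono pow_le_powr)
    also have "\<dots> = D * (1 + (cmod z ^ 2) powr real (degree q))"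
      unfolding D_def by (simp add: sum_distrib_right)
    finally show ?thesis .
  qed
  moreover have "D \<ge> 0" unfolding D_def by (simp add: sum_nonneg)
  ultimately show ?thesis by blast
qed

lemma gen_case:
  fixes p :: "real poly"
  shows "\<exists>F :: complex \<Rightarrow> complex. F holomorphic_on UNIV \<and>
           (\<forall>x::real. F (complex_of_real x) = complex_of_real (fG x + poly p x * exp (- (x^2)))) \<and>
           (\<exists>C q :: real. C \<ge> 0 \<and> q \<ge> 0 \<and>
              (\<forall>x y :: real. cmod (F (Complex x y)) \<le>
                 (if x \<ge> 0 then C * (1 + (x^2 + y^2) powr q) * exp (y^2 - x^2)
                  else C * (1 + (x^2 + y^2) powr q) * (1 + exp (y^2 - x^2)))))"
proof -
  obtain FG C0 where C0: "C0 \<ge> 0" and hol: "FG holomorphic_on UNIV"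
    and re: "\<And>x. FG (of_real x) = of_real (fG x)"
    and bd: "\<And>x y. cmod (FG (Complex x y)) \<le> C0 * (if x \<ge> 0 then exp (y^2 - x^2) else 1 + exp (y^2 - x^2))"
    using gauss_part by blast
  define pc where "pc = map_poly complex_of_real p"
  obtain D where D: "D \<ge> 0" and pd: "\<And>z. cmod (poly pc z) \<le> D * (1 + (cmod z ^ 2) powr real (degree pc))"
    using poly_growth by blast
  define F where "F = (\<lambda>z. FG z + poly pc z * exp (-(z^2)))"
  have "F holomorphic_on UNIV" unfolding F_def using hol by (intro holomorphic_intros) auto
  moreover have "F (of_real x) = of_real (fG x + poly p x * exp (- (x^2)))" for x
  proof -
    have "poly pc (of_real x) = of_real (poly p x)" unfolding pc_def
      by (induction p) (auto simp: map_poly_pCons)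
    then show ?thesis unfolding F_def by (simp add: re flip: exp_of_real)
  qed
  moreover have "cmod (F (Complex x y)) \<le>
                 (if x \<ge> 0 then (C0 + D) * (1 + (x^2 + y^2) powr real (degree pc)) * exp (y^2 - x^2)
                  else (C0 + D) * (1 + (x^2 + y^2) powr real (degree pc)) * (1 + exp (y^2 - x^2)))" for x y
  proof -
    define E where "E = exp (y^2 - x^2)"
    define P where "P = (x^2 + y^2) powr real (degree pc)"
    have E0: "E \<ge> 0" and P0: "P \<ge> 0" unfolding E_def P_def by auto
    have nz: "cmod (Complex x y) ^ 2 = x^2 + y^2" by (simp add: cmod_def)
    have ne: "cmod (exp (-((Complex x y)^2))) = E" unfolding E_def by (simp add: power2_eq_square)
    have "cmod (F (Complex x y)) \<le> cmod (FG (Complex x y)) + cmod (poly pc (Complex x y)) * E"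
    proof -
      have t: "cmod (FG (Complex x y) + poly pc (Complex x y) * exp (-((Complex x y)^2))) \<le>
          cmod (FG (Complex x y)) + cmod (poly pc (Complex x y) * exp (-((Complex x y)^2)))"
        by (rule norm_triangle_ineq)
      have m: "cmod (poly pc (Complex x y) * exp (-((Complex x y)^2))) = cmod (poly pc (Complex x y)) * E"
        by (simp only: norm_mult ne)
      show ?thesis unfolding F_def using t m by linarith
    qed
    also have "\<dots> \<le> C0 * (if x \<ge> 0 then E else 1 + E) + D * (1 + P) * E"
      using bd[of x y] pd[of "Complex x y"] E0 unfolding E_def[symmetric] P_def nz[symmetric]
      by (intro add_mono mult_right_mono) auto
    also have "\<dots> \<le> (if x \<ge> 0 then (C0 + D) * (1 + P) * E else (C0 + D) * (1 + P) * (1 + E))"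
    proof -
      have a: "0 \<le> C0 * P * E" "0 \<le> C0 * P" "0 \<le> D * (1 + P)" using C0 D E0 P0 by auto
      show ?thesis using a by (auto simp: algebra_simps)
    qed
    finally show ?thesis unfolding E_def P_def .
  qed
  ultimately show ?thesis using C0 D
    by (intro exI[of _ F] conjI exI[of _ "C0 + D"] exI[of _ "real (degree pc)"]) auto
qed

theorem lemmaA7:
  fixes f :: "real \<Rightarrow> real"
  assumes "gaussian_type_smearing f"
  shows "\<exists>F :: complex \<Rightarrow> complex. F holomorphic_on UNIV \<and>
           (\<forall>x::real. F (complex_of_real x) = complex_of_real (f x)) \<and>
           (\<exists>C q :: real. C \<ge> 0 \<and> q \<ge> 0 \<and>
              (\<forall>x y :: real. cmod (F (Complex x y)) \<le>
                 (if x \<ge> 0 then C * (1 + (x^2 + y^2) powr q) * exp (y^2 - x^2)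
                  else C * (1 + (x^2 + y^2) powr q) * (1 + exp (y^2 - x^2)))))"
proof -
  obtain p where p: "f = (\<lambda>x. fG x + poly p x * exp (- (x^2)))"
  proof -
    consider "f = fG" | N where "f = fMP N" | a where "f = fcs a"
      using assms unfolding gaussian_type_smearing_def by blast
    then show ?thesis
    proof cases
      case 1
      then show ?thesis using that[of 0] by auto
    next
      case (2 N)
      show ?thesis
        apply (rule that[of "\<Sum>n = 1..N. smult (mpA n) (hermite (2 * n - 1))"])
        unfolding 2 fMP_def by (auto simp: poly_sum sum_distrib_right)
    next
      case (3 a)
      show ?thesis
        apply (rule that[of "smult (1 / (4 * sqrt pi)) (smult (- a) (hermite 2) + hermite 1)"])
        unfolding 3 fcs_def by (auto simp: algebra_simps)
    qed
  qed
  show ?thesis unfolding p by (rule gen_case)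
qed

end
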